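(* Let $X = \{\sum_{k=0}^m d_k 10^{-k} : m \ge 0,\ d_k \in \{0,1,\dots,9\},\ d_0 \neq 0\}$ be the set of terminating decimals in $[1,10)$. Consider the game in which the casino chooses $x \in X$, the player chooses $y \in X$, and the casino wins if the first (leading) decimal digit of $xy$ is $1$, $2$ or $3$, i.e. $xy \in [1,4)\cup[10,40)$. For probability measures $\mu$ (casino) and $\nu$ (player) on the countable set $X$, let $P(\mu,\nu)=\sum_{x,y \in X} \mu\{x\}\nu\{y\}\,\mathbf 1[xy \in [1,4)\cup[10,40)]$. Then $$\sup_\mu \inf_\nu P(\mu,\nu) = \inf_\nu \sup_\mu P(\mu,\nu) = \log_{10} 4.$$ More precisely, for $n\ge1$ let $X_n\subseteq X$ be the terminating decimals in $[1,10)$ with exactly $n$ digits ($m=n-1$) and let $\beta_n$ be the probability measure on $X_n$ with $\beta_n\{x\} = \log_{10}(x + 10^{-(n-1)}) - \log_{10} x$. Then for every $\epsilon>0$ there is $N$ such that for all $n\ge N$: $P(\beta_n,\nu) \ge \log_{10}4 - \epsilon$ for every $\nu$, and $P(\mu,\beta_n) \le \log_{10}4+\epsilon$ for every $\mu$.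
   Context: This is the "multiplication game" in which players choose positive integers and the first digit of the product decides the winner; choosing integers is equivalent to choosing elements of $X$ (moving the decimal point does not affect the leading digit of the product). The casino maximizes and the player minimizes the casino's winning probability $P$. *)

theory Defs
  imports "HOL-Probability.Probability"
begin

definition decX :: "real set" where
  "decX = {(\<Sum>k=0..m. real (d k) / 10 ^ k) | m d. (\<forall>k. d k \<le> (9::nat)) \<and> d 0 \<noteq> 0}"

definition decXn :: "nat \<Rightarrow> real set" where
  "decXn n = {(\<Sum>k=0..n-1. real (d k) / 10 ^ k) | d. (\<forall>k. d k \<le> (9::nat)) \<and> d 0 \<noteq> 0}"

definition probsX :: "real pmf set" where
  "probsX = {p. set_pmf p \<subseteq> decX}"

definition casino_wins :: "real \<Rightarrow> real \<Rightarrow> bool" where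
  "casino_wins x y \<longleftrightarrow> x * y \<in> {1..<4} \<union> {10..<40}"

definition Pwin :: "real pmf \<Rightarrow> real pmf \<Rightarrow> real" where
  "Pwin \<mu> \<nu> = (\<Sum>\<^sub>\<infinity>(x, y)\<in>decX \<times> decX.
      pmf \<mu> x * pmf \<nu> y * (if casino_wins x y then 1 else 0))"

definition beta :: "nat \<Rightarrow> real pmf" where
  "beta n = embed_pmf (\<lambda>x. if x \<in> decXn n
      then log 10 (x + 10 powr (- real (n - 1))) - log 10 x else 0)"

end

theory Submission
  imports Defs
begin


definition T :: "nat \<Rightarrow> (nat\<Rightarrow>nat) \<Rightarrow> nat" where "T N d = (\<Sum>k=0..N. d k * 10^(N-k))"

lemma T_0[simp]: "T 0 d = d 0" by (simp add: T_def)

lemma T_Suc: "T (Suc N) d = 10 * T N d + d (Suc N)"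
proof -
  have "(\<Sum>k=0..N. d k * 10^(Suc N-k)) = 10 * (\<Sum>k=0..N. d k * 10^(N-k))"
    by (simp add: sum_distrib_left Suc_diff_le mult_ac)
  then show ?thesis by (simp add: T_def)
qed

lemma T_real: "(\<Sum>k=0..N. real (d k) / 10^k) = real (T N d) / 10^N"
proof (induction N)
  case 0 then show ?case by simp
next
  case (Suc N)
  have "(\<Sum>k=0..Suc N. real (d k) / 10^k) = real (T N d) / 10^N + real (d (Suc N)) / 10^Suc N"
    using Suc by simp
  also have "\<dots> = real (T (Suc N) d) / 10^Suc N"
    by (simp add: T_Suc field_simps)
  finally show ?case .
qed

lemma T_upper: "\<forall>k. d k \<le> 9 \<Longrightarrow> T N d < (d 0 + 1) * 10^N"
proof (induction N)
  case 0 then show ?case by simp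
next
  case (Suc N)
  then have "T N d + 1 \<le> (d 0 + 1) * 10^N" by simp
  then have "10 * T N d + 10 \<le> 10 * ((d 0 + 1) * 10^N)" by linarith
  moreover have "d (Suc N) \<le> 9" using Suc by simp
  ultimately show ?case by (simp add: T_Suc)
qed

lemma T_lower: "d 0 * 10^N \<le> T N d"
proof (induction N)
  case 0 then show ?case by simp
next
  case (Suc N)
  then show ?case by (simp add: T_Suc)
qed

lemma T_surj: "j < 10^(Suc N) \<Longrightarrow> \<exists>d. (\<forall>k. d k \<le> 9) \<and> T N d = j"
proof (induction N arbitrary: j)
  case 0
  then show ?case by (intro exI[of _ "\<lambda>_. j"]) simp
next
  case (Suc N)
  have "j div 10 < 10^Suc N" using Suc.prems by (simp add: less_mult_imp_div_less mult.commute)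
  then obtain d where d: "\<forall>k. d k \<le> 9" "T N d = j div 10" using Suc.IH by blast
  define d' where "d' = d(Suc N := j mod 10)"
  have "T N d' = T N d" unfolding T_def d'_def by (intro sum.cong) auto
  then have "T (Suc N) d' = j" using d by (simp add: T_Suc d'_def)
  moreover have "\<forall>k. d' k \<le> 9" using d by (simp add: d'_def)
  ultimately show ?case by blast
qed

lemma decXn_eq: "decXn n = (\<lambda>j. real j / 10^(n-1)) ` {10^(n-1)..<10*10^(n-1)}"
proof safe
  fix x assume "x \<in> decXn n"
  then obtain d where d: "\<forall>k. d k \<le> 9" "d 0 \<noteq> 0" and x: "x = (\<Sum>k=0..n-1. real (d k) / 10^k)"
    by (auto simp: decXn_def)
  have "x = real (T (n-1) d) / 10^(n-1)" using x T_real by simp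
  moreover have "T (n-1) d < 10 * 10^(n-1)"
  proof -
    have "d 0 + 1 \<le> 10" using d(1)[rule_format, of 0] by simp
    then have "(d 0 + 1) * 10^(n-1) \<le> 10 * 10^(n-1)" by (rule mult_le_mono1)
    then show ?thesis using T_upper[OF d(1), of "n-1"] by linarith
  qed
  moreover have "10^(n-1) \<le> T (n-1) d"
  proof -
    have "1 * 10^(n-1) \<le> d 0 * 10^(n-1)" using d(2) by (intro mult_le_mono1) simp
    then show ?thesis using T_lower[of d "n-1"] by linarith
  qed
  ultimately show "x \<in> (\<lambda>j. real j / 10^(n-1)) ` {10^(n-1)..<10*10^(n-1)}" by auto
next
  fix j :: nat assume j: "j \<in> {10^(n-1)..<10*10^(n-1)}"
  then obtain d where d: "\<forall>k. d k \<le> 9" "T (n-1) d = j" using T_surj[of j "n-1"] by auto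
  have "d 0 \<noteq> 0"
  proof
    assume "d 0 = 0"
    then have "T (n-1) d < 10^(n-1)" using T_upper[OF d(1), of "n-1"] by simp
    then show False using j d by simp
  qed
  moreover have "real j / 10^(n-1) = (\<Sum>k=0..n-1. real (d k)/10^k)" using d T_real[of d "n-1"] by simp
  ultimately show "real j / 10^(n-1) \<in> decXn n" unfolding decXn_def
    using d by blast
qed




definition w :: "nat \<Rightarrow> nat \<Rightarrow> real" where
  "w M j = log 10 (real (Suc j) / M) - log 10 (real j / M)"

definition S :: "nat \<Rightarrow> real \<Rightarrow> real" where
  "S M c = (\<Sum>j\<in>{j\<in>{M..<10*M}. real j / M < c}. w M j)"

definition clamp10 :: "real \<Rightarrow> real" where "clamp10 c = max 1 (min 10 c)"

lemma ln10_ge1: "1 \<le> ln (10::real)"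
proof -
  have "exp 1 \<le> (10::real)" using exp_le by simp
  then have "ln (exp 1) \<le> ln (10::real)" by (subst ln_le_cancel_iff) auto
  then show ?thesis by simp
qed

lemma log_step: assumes "1 \<le> a" "0 \<le> \<delta>" shows "log 10 (a + \<delta>) \<le> log 10 a + \<delta>"
proof -
  have "ln (a + \<delta>) - ln a = ln ((a+\<delta>)/a)" using assms by (simp add: ln_div)
  also have "\<dots> \<le> (a+\<delta>)/a - 1" using assms by (intro ln_le_minus_one) auto
  also have "\<dots> = \<delta>/a" using assms by (simp add: field_simps)
  also have "\<dots> \<le> \<delta>" using assms mult_left_mono[of 1 a \<delta>] by (simp add: divide_le_eq)
  finally have "ln (a + \<delta>) - ln a \<le> \<delta>" .
  then have "(ln (a + \<delta>) - ln a) / ln 10 \<le> \<delta>"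
  proof -
    have l: "0 < ln (10::real)" using ln10_ge1 by linarith
    have "\<delta> \<le> \<delta> * ln 10" using mult_left_mono[OF ln10_ge1, of \<delta>] assms by simp
    with \<open>ln (a + \<delta>) - ln a \<le> \<delta>\<close> l show ?thesis by (simp add: divide_le_eq)
  qed
  then show ?thesis unfolding log_def by (simp add: diff_divide_distrib)
qed

lemma tele: assumes "0 < M" "M \<le> p" shows "(\<Sum>j\<in>{M..<p}. w M j) = log 10 (real p / M)"
proof -
  have "(\<Sum>j\<in>{M..<p}. w M j) = (\<Sum>j=M..<p. log 10 (real (Suc j) / M) - log 10 (real j / M))"
    unfolding w_def by (rule refl)
  also have "\<dots> = log 10 (real p / M) - log 10 (real M / M)"
    using sum_Suc_diff'[OF assms(2), of "\<lambda>i. log 10 (real i / M)"] by simp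
  finally show ?thesis using assms by simp
qed

lemma S_bound: assumes "0 < M"
  shows "log 10 (clamp10 c) \<le> S M c \<and> S M c \<le> log 10 (clamp10 c) + 1 / M"
proof -
  define q where "q = nat \<lceil>c*M\<rceil>"
  define p where "p = max M (min (10*M) q)"
  have set: "{j\<in>{M..<10*M}. real j / M < c} = {M..<p}"
  proof -
    have "real j / M < c \<longleftrightarrow> j < q" for j
    proof -
      have "real j / M < c \<longleftrightarrow> real j < c * M" using assms by (simp add: divide_less_eq)
      also have "\<dots> \<longleftrightarrow> int j < \<lceil>c*M\<rceil>" by (simp add: less_ceiling_iff)
      also have "\<dots> \<longleftrightarrow> j < q" unfolding q_def by linarith
      finally show ?thesis .
    qed
    note iff = this
    have "j \<in> {M..<p} \<longleftrightarrow> M \<le> j \<and> j < 10*M \<and> j < q" for j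
      unfolding p_def atLeastLessThan_iff less_max_iff_disj min_less_iff_conj by auto
    note jp = this
    show ?thesis
    proof (rule set_eqI)
      fix j show "j \<in> {j\<in>{M..<10*M}. real j / M < c} \<longleftrightarrow> j \<in> {M..<p}"
        using iff[of j] jp[of j] by simp
    qed
  qed
  have Sp: "S M c = log 10 (real p / M)" unfolding S_def set using assms by (intro tele) (auto simp: p_def)
  have c1: "real_of_int \<lceil>c*M\<rceil> \<ge> c*M" "real_of_int \<lceil>c*M\<rceil> < c*M + 1" by linarith+
  have pM: "real p = max M (min (10*M) (real q))" unfolding p_def by simp
  have Mp: "real M > 0" using assms by simp
  have e: "real q = max 0 (real_of_int \<lceil>c*M\<rceil>)" unfolding q_def by simp
  have cm: "clamp10 c * M = max M (min (10*M) (c*M))" unfolding clamp10_def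
    using Mp by (simp add: max_mult_distrib_right min_mult_distrib_right)
  have lo: "clamp10 c * M \<le> real p" and hi: "real p \<le> clamp10 c * M + 1"
    unfolding pM cm e using c1 Mp by linarith+
  have "clamp10 c \<ge> 1" by (simp add: clamp10_def)
  have a: "clamp10 c \<le> real p / M" using lo Mp by (simp add: le_divide_eq)
  have "real p / M \<le> (clamp10 c * M + 1)/M" using hi Mp by (simp add: divide_right_mono)
  also have "\<dots> = clamp10 c + 1/M" using Mp by (simp add: add_divide_distrib)
  finally have b: "real p / M \<le> clamp10 c + 1/M" .
  have "log 10 (clamp10 c) \<le> log 10 (real p / M)" using a \<open>clamp10 c \<ge> 1\<close> by (intro log_mono) auto
  moreover have "log 10 (real p / M) \<le> log 10 (clamp10 c + 1/M)"
    using b \<open>clamp10 c \<ge> 1\<close> a by (intro log_mono) auto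
  moreover have "log 10 (clamp10 c + 1/M) \<le> log 10 (clamp10 c) + 1/M"
    using \<open>clamp10 c \<ge> 1\<close> by (intro log_step) auto
  ultimately show ?thesis using Sp by linarith
qed




lemma cw_split: assumes "1 \<le> x" "x < 10" "1 \<le> y" "y < 10"
  shows "(if casino_wins x y then 1 else 0::real) =
    (if x < 4/y then 1 else 0) + (if x < 40/y then 1 else 0) - (if x < 10/y then 1 else 0)"
proof -
  have y0: "0 < y" using assms by simp
  have e1: "x < 4/y \<longleftrightarrow> x*y < 4" using y0 by (simp add: less_divide_eq)
  have e2: "x < 40/y \<longleftrightarrow> x*y < 40" using y0 by (simp add: less_divide_eq)
  have e3: "x < 10/y \<longleftrightarrow> x*y < 10" using y0 by (simp add: less_divide_eq)
  have "1 \<le> x*y" using mult_mono[of 1 x 1 y] assms by simp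
  then have cw: "casino_wins x y \<longleftrightarrow> x*y < 4 \<or> (10 \<le> x*y \<and> x*y < 40)"
    unfolding casino_wins_def by auto
  show ?thesis unfolding e1 e2 e3 cw by auto
qed

lemma Tsum: assumes "0 < M" "1 \<le> y" "y < 10"
  shows "(\<Sum>j\<in>{M..<10*M}. w M j * (if casino_wins (real j / M) y then 1 else 0))
     = S M (4/y) + S M (40/y) - S M (10/y)"
proof -
  have "(\<Sum>j\<in>{M..<10*M}. w M j * (if casino_wins (real j / M) y then 1 else 0))
     = (\<Sum>j\<in>{M..<10*M}. (if real j / M < 4/y then w M j else 0) + (if real j / M < 40/y then w M j else 0)
          - (if real j / M < 10/y then w M j else 0))"
  proof (rule sum.cong[OF refl])
    fix j assume j: "j \<in> {M..<10*M}"
    have M0: "0 < real M" using assms by simp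
    have "1 \<le> real j / M" using j M0 by (simp add: le_divide_eq)
    moreover have "real j / M < 10" using j M0 by (simp add: divide_less_eq)
    ultimately show "w M j * (if casino_wins (real j / M) y then 1 else 0) =
      (if real j / M < 4/y then w M j else 0) + (if real j / M < 40/y then w M j else 0)
          - (if real j / M < 10/y then w M j else 0)"
      using cw_split[of "real j / M" y] assms by (simp split: if_splits)
  qed
  also have "\<dots> = S M (4/y) + S M (40/y) - S M (10/y)"
    unfolding S_def sum.inter_filter[OF finite_atLeastLessThan] by (simp add: sum.distrib sum_subtractf)
  finally show ?thesis .
qed

lemma clamp_val: assumes "1 \<le> y" "y < 10"
  shows "log 10 (clamp10 (4/y)) + log 10 (clamp10 (40/y)) - log 10 (clamp10 (10/y)) = log 10 4"
proof -
  have y0: "0 < y" using assms by simp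
  have c3: "clamp10 (10/y) = 10/y" unfolding clamp10_def using assms y0
    by (simp add: le_divide_eq divide_le_eq)
  show ?thesis
  proof (cases "y \<le> 4")
    case True
    have "clamp10 (4/y) = 4/y" "clamp10 (40/y) = 10" unfolding clamp10_def using True y0 assms
      by (simp_all add: le_divide_eq divide_le_eq)
    then show ?thesis using c3 y0 by (simp add: log_divide)
  next
    case False
    have "clamp10 (4/y) = 1" "clamp10 (40/y) = 40/y" unfolding clamp10_def using False y0 assms
      by (simp_all add: le_divide_eq divide_le_eq)
    moreover have "log 10 (40/y) - log 10 (10/y) = log 10 4"
    proof -
      have "log 10 (40/y) = log 10 (4 * (10/y))" by simp
      also have "\<dots> = log 10 4 + log 10 (10/y)" using y0 by (subst log_mult) auto
      finally show ?thesis by simp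
    qed
    ultimately show ?thesis using c3 by simp
  qed
qed

lemma Tbound: assumes "0 < M" "1 \<le> y" "y < 10"
  shows "log 10 4 - 2/M \<le> (\<Sum>j\<in>{M..<10*M}. w M j * (if casino_wins (real j / M) y then 1 else 0))
     \<and> (\<Sum>j\<in>{M..<10*M}. w M j * (if casino_wins (real j / M) y then 1 else 0)) \<le> log 10 4 + 2/M"
  using Tsum[OF assms] clamp_val[OF assms(2,3)] S_bound[OF assms(1), of "4/y"]
    S_bound[OF assms(1), of "40/y"] S_bound[OF assms(1), of "10/y"]
  by (simp add: field_simps) linarith?




lemma decXn_sub: "decXn n \<subseteq> decX"
  unfolding decXn_def decX_def by blast

lemma decX_in: "x \<in> decX \<Longrightarrow> \<exists>n. x \<in> decXn n"
proof -
  assume "x \<in> decX"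
  then obtain m d where "x = (\<Sum>k=0..m. real (d k) / 10 ^ k)" "\<forall>k. d k \<le> (9::nat)" "d 0 \<noteq> 0"
    unfolding decX_def by blast
  then have "x \<in> decXn (Suc m)" unfolding decXn_def by auto
  then show ?thesis by blast
qed

lemma decXn_bounds: "x \<in> decXn n \<Longrightarrow> 1 \<le> x \<and> x < 10"
proof -
  assume "x \<in> decXn n"
  then obtain j where j: "j \<in> {10^(n-1)..<10*10^(n-1)}" "x = real j / 10^(n-1)"
    unfolding decXn_eq by blast
  have "real (10^(n-1)) \<le> real j" "real j < real (10*10^(n-1))" using j(1) by (simp_all only: of_nat_le_iff of_nat_less_iff atLeastLessThan_iff)
  then have "10^(n-1) \<le> real j" "real j < 10*10^(n-1)" by simp_all
  then show ?thesis using j(2) by (simp add: le_divide_eq divide_less_eq)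
qed

lemma decX_bounds: "x \<in> decX \<Longrightarrow> 1 \<le> x \<and> x < 10"
  using decX_in decXn_bounds by blast

lemma finite_decXn: "finite (decXn n)" unfolding decXn_eq by simp

lemma countable_decX: "countable decX"
proof -
  have "decX = (\<Union>n. decXn n)" using decX_in decXn_sub by blast
  moreover have "countable (\<Union>n. decXn n)"
    by (intro countable_UN) (auto intro: countable_finite finite_decXn)
  ultimately show ?thesis by simp
qed

definition MM :: "nat \<Rightarrow> nat" where "MM n = 10^(n-1)"

lemma MM_pos: "0 < MM n" by (simp add: MM_def)

lemma decXn_MM: "decXn n = (\<lambda>j. real j / MM n) ` {MM n..<10 * MM n}"
  unfolding decXn_eq MM_def by simp

lemma powr_MM: "(10::real) powr (- real (n - 1)) = 1 / real (MM n)"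
  unfolding MM_def by (simp add: powr_minus powr_realpow divide_inverse)

lemma bf_w: "log 10 (real j / MM n + 10 powr (- real (n - 1))) - log 10 (real j / MM n) = w (MM n) j"
proof -
  have "real j / MM n + 10 powr (- real (n - 1)) = real (Suc j) / MM n"
    unfolding powr_MM by (simp add: add_divide_distrib)
  then show ?thesis unfolding w_def by simp
qed

lemma w_nonneg: "0 < M \<Longrightarrow> 0 < j \<Longrightarrow> 0 \<le> w M j"
  unfolding w_def by (simp add: divide_right_mono)

lemma inj_div: "inj_on (\<lambda>j. real j / real (MM n)) A"
  using MM_pos[of n] by (intro inj_onI) (simp add: field_simps)

definition bf :: "nat \<Rightarrow> real \<Rightarrow> real" where
  "bf n = (\<lambda>x. if x \<in> decXn n then log 10 (x + 10 powr (- real (n - 1))) - log 10 x else 0)"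

lemma bf_nonneg: "0 \<le> bf n x"
proof (cases "x \<in> decXn n")
  case True
  then obtain j where j: "j \<in> {MM n..<10 * MM n}" "x = real j / MM n" unfolding decXn_MM by blast
  have "0 < j" using j(1) MM_pos[of n] by simp
  then show ?thesis using True j bf_w w_nonneg[OF MM_pos] by (simp add: bf_def)
qed (simp add: bf_def)

lemma sum_decXn: "(\<Sum>x\<in>decXn n. f x) = (\<Sum>j\<in>{MM n..<10 * MM n}. f (real j / MM n))"
  unfolding decXn_MM by (subst sum.reindex[OF inj_div]) simp

lemma bf_sum: "(\<Sum>x\<in>decXn n. bf n x) = 1"
proof -
  have "(\<Sum>x\<in>decXn n. bf n x) = (\<Sum>j\<in>{MM n..<10 * MM n}. w (MM n) j)"
    unfolding sum_decXn
  proof (rule sum.cong[OF refl])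
    fix j assume "j \<in> {MM n..<10 * MM n}"
    then have "real j / MM n \<in> decXn n" unfolding decXn_MM by blast
    then show "bf n (real j / MM n) = w (MM n) j" using bf_w by (simp add: bf_def)
  qed
  also have "\<dots> = log 10 (real (10 * MM n) / MM n)" using MM_pos[of n] by (intro tele) auto
  also have "\<dots> = 1" using MM_pos[of n] by simp
  finally show ?thesis .
qed

lemma pmf_beta: "pmf (beta n) x = bf n x"
proof -
  have "beta n = embed_pmf (bf n)" unfolding beta_def bf_def ..
  moreover have "(\<integral>\<^sup>+x. ennreal (bf n x) \<partial>count_space UNIV) = 1"
  proof -
    have "(\<integral>\<^sup>+x. ennreal (bf n x) \<partial>count_space UNIV) = (\<Sum>x\<in>decXn n. ennreal (bf n x))"
      by (rule nn_integral_count_space') (auto simp: finite_decXn bf_def)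
    also have "\<dots> = ennreal (\<Sum>x\<in>decXn n. bf n x)" using bf_nonneg by simp
    finally show ?thesis using bf_sum by simp
  qed
  ultimately show ?thesis using bf_nonneg pmf_embed_pmf[of "bf n"] by simp
qed

lemma beta_probsX: "beta n \<in> probsX"
proof -
  have "set_pmf (beta n) \<subseteq> decXn n" unfolding set_pmf_eq pmf_beta bf_def by auto
  then show ?thesis using decXn_sub unfolding probsX_def by blast
qed




definition II :: "real \<Rightarrow> real \<Rightarrow> real" where "II x y = (if casino_wins x y then 1 else 0)"

lemma II_bounds: "0 \<le> II x y" "II x y \<le> 1" by (simp_all add: II_def)

lemma II_comm: "II x y = II y x" by (simp add: II_def casino_wins_def mult.commute)

lemma summ_prod: "Infinite_Set_Sum.abs_summable_on (\<lambda>(x,y). pmf \<mu> x * pmf \<nu> y * II x y) (decX \<times> decX)"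
proof (rule abs_summable_on_comparison_test'[OF abs_summable_on_product[OF countable_decX countable_decX pmf_abs_summable pmf_abs_summable]])
  fix z assume "z \<in> decX \<times> decX"
  show "norm ((\<lambda>(x,y). pmf \<mu> x * pmf \<nu> y * II x y) z) \<le> (\<lambda>(x,y). pmf \<mu> x * pmf \<nu> y) z"
    by (cases z) (simp add: II_def abs_mult)
qed

lemma Pwin_infsetsum: "Pwin \<mu> \<nu> = infsetsum (\<lambda>(x,y). pmf \<mu> x * pmf \<nu> y * II x y) (decX \<times> decX)"
  unfolding Pwin_def II_def[symmetric] using infsetsum_infsum[OF summ_prod[of \<mu> \<nu>]] by simp

lemma inner_summ: "Infinite_Set_Sum.abs_summable_on (\<lambda>y. pmf p y * g y) A" if "\<And>y. \<bar>g y\<bar> \<le> 1" for g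
  by (rule abs_summable_on_comparison_test'[OF pmf_abs_summable])
     (use that in \<open>auto simp: abs_mult intro: mult_left_le\<close>)

lemma Pwin_eq1: "Pwin \<mu> \<nu> = infsetsum (\<lambda>y. pmf \<nu> y * infsetsum (\<lambda>x. pmf \<mu> x * II x y) decX) decX"
proof -
  have "Pwin \<mu> \<nu> = infsetsum (\<lambda>x. infsetsum (\<lambda>y. pmf \<mu> x * pmf \<nu> y * II x y) decX) decX"
    unfolding Pwin_infsetsum
    by (rule infsetsum_Times'[symmetric, OF countable_decX countable_decX summ_prod])
  also have "\<dots> = infsetsum (\<lambda>y. infsetsum (\<lambda>x. pmf \<mu> x * pmf \<nu> y * II x y) decX) decX"
    by (rule infsetsum_swap[OF countable_decX countable_decX summ_prod])
  also have "\<dots> = infsetsum (\<lambda>y. pmf \<nu> y * infsetsum (\<lambda>x. pmf \<mu> x * II x y) decX) decX"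
  proof (rule infsetsum_cong[OF _ refl])
    fix y
    have "infsetsum (\<lambda>x. pmf \<mu> x * pmf \<nu> y * II x y) decX = infsetsum (\<lambda>x. pmf \<nu> y * (pmf \<mu> x * II x y)) decX"
      by (simp add: mult_ac)
    also have "\<dots> = pmf \<nu> y * infsetsum (\<lambda>x. pmf \<mu> x * II x y) decX"
      by (rule infsetsum_cmult_right) (rule inner_summ, simp add: II_def)
    finally show "infsetsum (\<lambda>x. pmf \<mu> x * pmf \<nu> y * II x y) decX = pmf \<nu> y * infsetsum (\<lambda>x. pmf \<mu> x * II x y) decX" .
  qed
  finally show ?thesis .
qed

lemma Pwin_eq2: "Pwin \<mu> \<nu> = infsetsum (\<lambda>x. pmf \<mu> x * infsetsum (\<lambda>y. pmf \<nu> y * II x y) decX) decX"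
proof -
  have "Pwin \<mu> \<nu> = infsetsum (\<lambda>x. infsetsum (\<lambda>y. pmf \<mu> x * pmf \<nu> y * II x y) decX) decX"
    unfolding Pwin_infsetsum
    by (rule infsetsum_Times'[symmetric, OF countable_decX countable_decX summ_prod])
  also have "\<dots> = infsetsum (\<lambda>x. pmf \<mu> x * infsetsum (\<lambda>y. pmf \<nu> y * II x y) decX) decX"
  proof (rule infsetsum_cong[OF _ refl])
    fix x
    have "infsetsum (\<lambda>y. pmf \<mu> x * pmf \<nu> y * II x y) decX = infsetsum (\<lambda>y. pmf \<mu> x * (pmf \<nu> y * II x y)) decX"
      by (simp add: mult_ac)
    also have "\<dots> = pmf \<mu> x * infsetsum (\<lambda>y. pmf \<nu> y * II x y) decX"
      by (rule infsetsum_cmult_right) (rule inner_summ, simp add: II_def)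
    finally show "infsetsum (\<lambda>y. pmf \<mu> x * pmf \<nu> y * II x y) decX = pmf \<mu> x * infsetsum (\<lambda>y. pmf \<nu> y * II x y) decX" .
  qed
  finally show ?thesis .
qed

lemma inner_bounds: "0 \<le> infsetsum (\<lambda>x. pmf p x * II x y) A \<and> infsetsum (\<lambda>x. pmf p x * II x y) A \<le> 1"
proof
  show "0 \<le> infsetsum (\<lambda>x. pmf p x * II x y) A" by (intro infsetsum_nonneg) (simp add: II_def)
  have "infsetsum (\<lambda>x. pmf p x * II x y) A \<le> infsetsum (pmf p) A"
    by (rule infsetsum_mono[OF inner_summ pmf_abs_summable]) (auto simp: II_def)
  also have "\<dots> = measure (measure_pmf p) A" by (simp add: measure_pmf_conv_infsetsum)
  also have "\<dots> \<le> 1" by simp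
  finally show "infsetsum (\<lambda>x. pmf p x * II x y) A \<le> 1" .
qed

lemma avg_lower: assumes "set_pmf p \<subseteq> A" "\<And>y. \<bar>g y\<bar> \<le> 1" "\<And>y. y \<in> A \<Longrightarrow> c \<le> g y"
  shows "c \<le> infsetsum (\<lambda>y. pmf p y * g y) A"
proof -
  have "c = infsetsum (\<lambda>y. pmf p y * c) A"
    using infsetsum_cmult_left[of c "pmf p" A] pmf_abs_summable[of p A] infsetsum_pmf_eq_1[OF assms(1)] by simp
  also have "\<dots> \<le> infsetsum (\<lambda>y. pmf p y * g y) A"
    by (rule infsetsum_mono) (auto intro: abs_summable_on_cmult_left inner_summ assms mult_left_mono)
  finally show ?thesis .
qed

lemma avg_upper: assumes "set_pmf p \<subseteq> A" "\<And>y. \<bar>g y\<bar> \<le> 1" "\<And>y. y \<in> A \<Longrightarrow> g y \<le> c"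
  shows "infsetsum (\<lambda>y. pmf p y * g y) A \<le> c"
proof -
  have "infsetsum (\<lambda>y. pmf p y * g y) A \<le> infsetsum (\<lambda>y. pmf p y * c) A"
    by (rule infsetsum_mono) (auto intro: abs_summable_on_cmult_left inner_summ assms mult_left_mono)
  also have "\<dots> = c"
    using infsetsum_cmult_left[of c "pmf p" A] pmf_abs_summable[of p A] infsetsum_pmf_eq_1[OF assms(1)] by simp
  finally show ?thesis .
qed

lemma abs_inner: "\<bar>infsetsum (\<lambda>x. pmf p x * II x y) decX\<bar> \<le> 1"
  using inner_bounds[of p y decX] by linarith

lemma abs_inner2: "\<bar>infsetsum (\<lambda>y. pmf p y * II x y) decX\<bar> \<le> 1"
  using inner_bounds[of p x decX] II_comm by (simp add: II_comm[of x])

lemma Pwin_01: assumes "\<mu> \<in> probsX" "\<nu> \<in> probsX" shows "0 \<le> Pwin \<mu> \<nu> \<and> Pwin \<mu> \<nu> \<le> 1"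
proof -
  have s: "set_pmf \<nu> \<subseteq> decX" using assms by (simp add: probsX_def)
  define g where "g y = infsetsum (\<lambda>x. pmf \<mu> x * II x y) decX" for y
  have g1: "\<bar>g y\<bar> \<le> 1" for y unfolding g_def by (rule abs_inner)
  have "0 \<le> infsetsum (\<lambda>y. pmf \<nu> y * g y) decX"
    by (rule avg_lower[OF s g1]) (use inner_bounds in \<open>auto simp: g_def\<close>)
  moreover have "infsetsum (\<lambda>y. pmf \<nu> y * g y) decX \<le> 1"
    by (rule avg_upper[OF s g1]) (use inner_bounds in \<open>auto simp: g_def\<close>)
  ultimately show ?thesis unfolding Pwin_eq1 g_def by simp
qed




lemma inner_beta: "infsetsum (\<lambda>x. pmf (beta n) x * II x y) decX
   = (\<Sum>j\<in>{MM n..<10*MM n}. w (MM n) j * (if casino_wins (real j / MM n) y then 1 else 0))"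
proof -
  have "infsetsum (\<lambda>x. pmf (beta n) x * II x y) decX = infsetsum (\<lambda>x. bf n x * II x y) (decXn n)"
    by (rule infsetsum_cong_neutral) (use decXn_sub in \<open>auto simp: pmf_beta bf_def\<close>)
  also have "\<dots> = (\<Sum>x\<in>decXn n. bf n x * II x y)" by (simp add: finite_decXn)
  also have "\<dots> = (\<Sum>j\<in>{MM n..<10*MM n}. bf n (real j / MM n) * II (real j / MM n) y)"
    by (rule sum_decXn)
  also have "\<dots> = (\<Sum>j\<in>{MM n..<10*MM n}. w (MM n) j * (if casino_wins (real j / MM n) y then 1 else 0))"
  proof (rule sum.cong[OF refl])
    fix j assume "j \<in> {MM n..<10 * MM n}"
    then have "real j / MM n \<in> decXn n" unfolding decXn_MM by blast
    then show "bf n (real j / MM n) * II (real j / MM n) y = w (MM n) j * (if casino_wins (real j / MM n) y then 1 else 0)"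
      using bf_w by (simp add: bf_def II_def)
  qed
  finally show ?thesis .
qed

lemma inner_beta_bounds: assumes "y \<in> decX"
  shows "log 10 4 - 2 / MM n \<le> infsetsum (\<lambda>x. pmf (beta n) x * II x y) decX
       \<and> infsetsum (\<lambda>x. pmf (beta n) x * II x y) decX \<le> log 10 4 + 2 / MM n"
  unfolding inner_beta using Tbound[OF MM_pos, of y n] decX_bounds[OF assms] by simp

lemma beta_lo: assumes "\<nu> \<in> probsX" shows "log 10 4 - 2 / MM n \<le> Pwin (beta n) \<nu>"
proof -
  have s: "set_pmf \<nu> \<subseteq> decX" using assms by (simp add: probsX_def)
  define g where "g y = infsetsum (\<lambda>x. pmf (beta n) x * II x y) decX" for y
  have g1: "\<bar>g y\<bar> \<le> 1" for y unfolding g_def by (rule abs_inner)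
  have "log 10 4 - 2 / MM n \<le> infsetsum (\<lambda>y. pmf \<nu> y * g y) decX"
    by (rule avg_lower[OF s g1]) (use inner_beta_bounds in \<open>auto simp: g_def\<close>)
  then show ?thesis unfolding Pwin_eq1 g_def by simp
qed

lemma beta_hi: assumes "\<mu> \<in> probsX" shows "Pwin \<mu> (beta n) \<le> log 10 4 + 2 / MM n"
proof -
  have s: "set_pmf \<mu> \<subseteq> decX" using assms by (simp add: probsX_def)
  define g where "g x = infsetsum (\<lambda>y. pmf (beta n) y * II y x) decX" for x
  have g1: "\<bar>g y\<bar> \<le> 1" for y unfolding g_def by (rule abs_inner)
  have "infsetsum (\<lambda>x. pmf \<mu> x * g x) decX \<le> log 10 4 + 2 / MM n"
    by (rule avg_upper[OF s g1]) (use inner_beta_bounds in \<open>auto simp: g_def\<close>)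
  then show ?thesis unfolding Pwin_eq2 g_def by (simp add: II_comm[of _ "_ :: real"])
qed

lemma MM_large: "\<exists>N. \<forall>n\<ge>N. 2 / real (MM n) \<le> \<epsilon>" if "\<epsilon> > 0" for \<epsilon> :: real
proof -
  obtain N :: nat where N: "2 / \<epsilon> < N" using reals_Archimedean2 by blast
  have "2 / real (MM n) \<le> \<epsilon>" if "n \<ge> Suc N" for n
  proof -
    have "n - 1 < 2 ^ (n - 1)" by (rule less_exp)
    also have "(2::nat) ^ (n-1) \<le> 10 ^ (n-1)" by (rule power_mono) auto
    finally have "N < MM n" using that unfolding MM_def by linarith
    then have "2 / \<epsilon> < real (MM n)" using N by linarith
    then show ?thesis using \<open>\<epsilon> > 0\<close> MM_pos[of n] by (simp add: field_simps)
  qed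
  then show ?thesis by blast
qed




theorem mainTheorem2:
  shows "(SUP \<mu>\<in>probsX. INF \<nu>\<in>probsX. Pwin \<mu> \<nu>) = log 10 4
       \<and> (INF \<nu>\<in>probsX. SUP \<mu>\<in>probsX. Pwin \<mu> \<nu>) = log 10 4
       \<and> (\<forall>\<epsilon>>0. \<exists>N. \<forall>n\<ge>N.
            (\<forall>\<nu>\<in>probsX. Pwin (beta n) \<nu> \<ge> log 10 4 - \<epsilon>)
          \<and> (\<forall>\<mu>\<in>probsX. Pwin \<mu> (beta n) \<le> log 10 4 + \<epsilon>))"
proof -
  define L where "L = log 10 (4::real)"
  define A where "A = (SUP \<mu>\<in>probsX. INF \<nu>\<in>probsX. Pwin \<mu> \<nu>)"
  define B where "B = (INF \<nu>\<in>probsX. SUP \<mu>\<in>probsX. Pwin \<mu> \<nu>)"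
  have ne: "probsX \<noteq> {}" using beta_probsX by blast
  have eps: "\<exists>N. \<forall>n\<ge>N. (\<forall>\<nu>\<in>probsX. Pwin (beta n) \<nu> \<ge> L - \<epsilon>) \<and> (\<forall>\<mu>\<in>probsX. Pwin \<mu> (beta n) \<le> L + \<epsilon>)"
    if epos: "\<epsilon> > 0" for \<epsilon>
  proof -
    obtain N where N: "\<forall>n\<ge>N. 2 / real (MM n) \<le> \<epsilon>" using MM_large[OF epos] by blast
    have "(\<forall>\<nu>\<in>probsX. Pwin (beta n) \<nu> \<ge> L - \<epsilon>) \<and> (\<forall>\<mu>\<in>probsX. Pwin \<mu> (beta n) \<le> L + \<epsilon>)"
      if "n \<ge> N" for n
      using N that beta_lo[of _ n] beta_hi[of _ n] unfolding L_def by (smt (verit))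
    then show ?thesis by blast
  qed
  have bddI: "bdd_below ((\<lambda>\<nu>. Pwin \<mu> \<nu>) ` probsX)" if "\<mu> \<in> probsX" for \<mu>
    using Pwin_01 that by (intro bdd_belowI[of _ 0]) auto
  have bddS: "bdd_above ((\<lambda>\<mu>. Pwin \<mu> \<nu>) ` probsX)" if "\<nu> \<in> probsX" for \<nu>
    using Pwin_01 that by (intro bdd_aboveI[of _ 1]) auto
  have INF_le1: "(INF \<nu>\<in>probsX. Pwin \<mu> \<nu>) \<le> 1" if "\<mu> \<in> probsX" for \<mu>
  proof -
    have "(INF \<nu>\<in>probsX. Pwin \<mu> \<nu>) \<le> Pwin \<mu> (beta 0)"
      by (rule cINF_lower[OF bddI[OF that] beta_probsX])
    then show ?thesis using Pwin_01[OF that beta_probsX, of 0] by linarith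
  qed
  have SUP_ge0: "0 \<le> (SUP \<mu>\<in>probsX. Pwin \<mu> \<nu>)" if "\<nu> \<in> probsX" for \<nu>
  proof -
    have "Pwin (beta 0) \<nu> \<le> (SUP \<mu>\<in>probsX. Pwin \<mu> \<nu>)"
      by (rule cSUP_upper[OF beta_probsX bddS[OF that]])
    then show ?thesis using Pwin_01[OF beta_probsX that, of 0] by linarith
  qed
  have bddA: "bdd_above ((\<lambda>\<mu>. INF \<nu>\<in>probsX. Pwin \<mu> \<nu>) ` probsX)"
    using INF_le1 by (intro bdd_aboveI[of _ 1]) auto
  have bddB: "bdd_below ((\<lambda>\<nu>. SUP \<mu>\<in>probsX. Pwin \<mu> \<nu>) ` probsX)"
    using SUP_ge0 by (intro bdd_belowI[of _ 0]) auto
  have AB: "A \<le> B" unfolding A_def B_def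
  proof (rule cSUP_least[OF ne])
    fix \<mu> assume \<mu>: "\<mu> \<in> probsX"
    show "(INF \<nu>\<in>probsX. Pwin \<mu> \<nu>) \<le> (INF \<nu>\<in>probsX. SUP \<mu>\<in>probsX. Pwin \<mu> \<nu>)"
    proof (rule cINF_greatest[OF ne])
      fix \<nu> assume \<nu>: "\<nu> \<in> probsX"
      have "(INF \<nu>\<in>probsX. Pwin \<mu> \<nu>) \<le> Pwin \<mu> \<nu>" by (rule cINF_lower[OF bddI[OF \<mu>] \<nu>])
      also have "\<dots> \<le> (SUP \<mu>\<in>probsX. Pwin \<mu> \<nu>)" by (rule cSUP_upper[OF \<mu> bddS[OF \<nu>]])
      finally show "(INF \<nu>\<in>probsX. Pwin \<mu> \<nu>) \<le> (SUP \<mu>\<in>probsX. Pwin \<mu> \<nu>)" .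
    qed
  qed
  have Alo: "L - \<epsilon> \<le> A" if epos: "\<epsilon> > 0" for \<epsilon>
  proof -
    obtain N where N: "\<forall>\<nu>\<in>probsX. Pwin (beta N) \<nu> \<ge> L - \<epsilon>" using eps[OF epos] by blast
    have "L - \<epsilon> \<le> (INF \<nu>\<in>probsX. Pwin (beta N) \<nu>)"
      using N by (intro cINF_greatest[OF ne]) auto
    also have "\<dots> \<le> A" unfolding A_def by (rule cSUP_upper[OF beta_probsX bddA])
    finally show ?thesis .
  qed
  have Bhi: "B \<le> L + \<epsilon>" if epos: "\<epsilon> > 0" for \<epsilon>
  proof -
    obtain N where N: "\<forall>\<mu>\<in>probsX. Pwin \<mu> (beta N) \<le> L + \<epsilon>" using eps[OF epos] by blast
    have "B \<le> (SUP \<mu>\<in>probsX. Pwin \<mu> (beta N))" unfolding B_def by (rule cINF_lower[OF bddB beta_probsX])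
    also have "\<dots> \<le> L + \<epsilon>"
      using N by (intro cSUP_least[OF ne]) auto
    finally show ?thesis .
  qed
  have "L \<le> A"
  proof (rule ccontr)
    assume "\<not> L \<le> A"
    then have "0 < (L - A)/2" by (simp add: field_simps)
    from Alo[OF this] \<open>\<not> L \<le> A\<close> show False by (simp add: field_simps)
  qed
  moreover have "B \<le> L"
  proof (rule ccontr)
    assume "\<not> B \<le> L"
    then have "0 < (B - L)/2" by (simp add: field_simps)
    from Bhi[OF this] \<open>\<not> B \<le> L\<close> show False by (simp add: field_simps)
  qed
  ultimately have "A = L" "B = L" using AB by linarith+
  then show ?thesis using eps unfolding A_def B_def L_def by blast
qed


end
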